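(* Let $\lambda\approx1.5214$ be the real root of $t^3-t-2$. Define a weight on monomials (compositions in $\operatorname{End}\Lambda$) in the letters $x_i,v_i$ by $\mathrm{wt}(v_i)=\lambda^i$, $\mathrm{wt}(x_i)=-\lambda^i$, extended additively over the letters of a monomial. Then for every tail monomial $r_{n-3}$ and every $n\ge 0$, $$1.3\,\lambda^{n-5}<\mathrm{wt}(r_{n-3}v_n)\le\lambda^n,$$ and for every tail monomial $r_{n-5}$ and every $n\ge2$, $$1.1\,\lambda^{n-4}<\mathrm{wt}(r_{n-5}x_{n-2}v_n)\le 2\lambda^{n-3}.$$
   Context: $\Lambda$ is the Grassmann algebra on odd generators $x_0,x_1,\dots$, $x_i$ acting by left multiplication; $v_i=\sum_{k\ge0}\big(\prod_{n=0}^{k-1}x_{i+3n}x_{i+3n+1}\big)\partial_{i+3k}$ where $\partial_i$ is the superderivation with $\partial_i(x_j)=\delta_{ij}$. A tail monomial is $r_m=x_0^{\xi_0}\cdots x_m^{\xi_m}$, $\xi_i\in\{0,1\}$, with $r_m=1$ for $m<0$ (weight $0$). *)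

theory Defs
  imports Complex_Main
begin

text \<open>lambda: the real root of t^3 - t - 2 (it is the unique real root).\<close>
definition lam :: real where
  "lam = (THE t::real. t ^ 3 - t - 2 = 0)"

text \<open>Letters of monomials in End Lambda: x_i (left multiplication) and v_i.\<close>
datatype letter = X nat | V nat

type_synonym monomial = "letter list"

fun wt_letter :: "letter \<Rightarrow> real" where
  "wt_letter (V i) = lam ^ i"
| "wt_letter (X i) = - (lam ^ i)"

definition wt :: "monomial \<Rightarrow> real" where
  "wt w = (\<Sum>l\<leftarrow>w. wt_letter l)"

text \<open>Tail monomial r_m = x_0^{xi_0} ... x_m^{xi_m}; empty word (= 1) if m < 0.\<close>
definition tail :: "(nat \<Rightarrow> bool) \<Rightarrow> int \<Rightarrow> monomial" where
  "tail \<xi> m = map X (filter \<xi> [0..<nat (m + 1)])"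

end

theory Submission
  imports Defs
begin

lemma root_lo: assumes "(t::real)^3 - t - 2 = 0" shows "t > 1.52"
proof (rule ccontr)
  assume "\<not> t > 1.52"
  hence "t - 1.52 \<le> 0" by simp
  moreover have "t^2 + 1.52*t + 1.3104 > 0"
    using sum_power2_ge_zero[of "t + 0.76" 0] by (simp add: power2_eq_square algebra_simps)
  ultimately have "(t - 1.52)*(t^2 + 1.52*t + 1.3104) \<le> 0" by (simp add: mult_nonpos_nonneg)
  moreover have "t^3 - t - 2 = (t - 1.52)*(t^2 + 1.52*t + 1.3104) - 0.008192"
    by (simp add: power2_eq_square power3_eq_cube field_simps)
  ultimately show False using assms by simp
qed

lemma root_hi: assumes "(t::real)^3 - t - 2 = 0" shows "t < 1.53"
proof (rule ccontr)
  assume "\<not> t < 1.53"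
  hence "t - 1.53 \<ge> 0" by simp
  moreover have "t^2 + 1.53*t + 1.3409 > 0"
    using sum_power2_ge_zero[of "t + 0.765" 0] by (simp add: power2_eq_square algebra_simps)
  ultimately have "(t - 1.53)*(t^2 + 1.53*t + 1.3409) \<ge> 0" by simp
  moreover have "t^3 - t - 2 = (t - 1.53)*(t^2 + 1.53*t + 1.3409) + 0.051577"
    by (simp add: power2_eq_square power3_eq_cube field_simps)
  ultimately show False using assms by simp
qed

lemma root_ex: "\<exists>t::real. t^3 - t - 2 = 0"
proof -
  have "\<exists>x\<ge>1. x \<le> 2 \<and> (\<lambda>t::real. t^3 - t - 2) x = 0"
    by (rule IVT') (auto intro!: continuous_intros)
  thus ?thesis by auto
qed

lemma root_uniq: assumes "(t::real)^3 - t - 2 = 0" "(s::real)^3 - s - 2 = 0" shows "t = s"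
proof -
  have t: "t > 1.52" and s: "s > 1.52" using root_lo assms by auto
  have "(t - s) * (t^2 + t*s + s^2 - 1) = 0" using assms
    by (simp add: power2_eq_square power3_eq_cube field_simps)
  moreover have "t^2 + t*s + s^2 - 1 > 0"
  proof -
    have "t*s > 0" using t s by simp
    moreover have "t^2 > 1" using t by (intro one_less_power) auto
    ultimately show ?thesis by (smt (verit) zero_le_power2)
  qed
  ultimately show ?thesis by simp
qed

lemma lam_root: "lam^3 - lam - 2 = 0"
  unfolding lam_def using root_ex root_uniq by (metis (mono_tags, lifting) theI)

lemma lam_cube: "lam^3 = lam + 2" using lam_root by simp
lemma lam_lo: "lam > 1.52" using root_lo lam_root by blast
lemma lam_hi: "lam < 1.53" using root_hi lam_root by blast


definition TS :: "(nat \<Rightarrow> bool) \<Rightarrow> nat \<Rightarrow> real" where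
  "TS \<xi> k = sum_list (map (\<lambda>i. lam^i) (filter \<xi> [0..<k]))"

lemma wt_app: "wt (xs @ ys) = wt xs + wt ys" by (simp add: wt_def)

lemma wt_tail: "wt (tail \<xi> m) = - TS \<xi> (nat (m+1))"
proof -
  have "\<And>k. wt (map X (filter \<xi> [0..<k])) = - TS \<xi> k"
  proof -
    fix k show "wt (map X (filter \<xi> [0..<k])) = - TS \<xi> k"
      by (induction k) (auto simp: wt_def TS_def)
  qed
  thus ?thesis unfolding tail_def by simp
qed

lemma TS_bounds: "0 \<le> TS \<xi> k \<and> TS \<xi> k \<le> (\<Sum>i<k. lam^i)"
proof (induction k)
  case 0 then show ?case by (simp add: TS_def)
next
  case (Suc k)
  have "lam^k \<ge> 0" using lam_lo by simp
  with Suc show ?case by (auto simp: TS_def)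
qed

lemma geo: "(lam - 1) * (\<Sum>i<k. lam^i) = lam^k - 1"
  by (induction k) (auto simp: algebra_simps)

lemma TS_lt: "TS \<xi> k < lam^k / (lam - 1)"
proof -
  have "lam - 1 > 0" using lam_lo by simp
  have "(lam - 1) * TS \<xi> k \<le> lam^k - 1"
    using TS_bounds[of \<xi> k] geo[of k] \<open>lam - 1 > 0\<close>
    by (metis mult_left_mono less_imp_le)
  hence "(lam - 1) * TS \<xi> k < lam^k" by simp
  thus ?thesis using \<open>lam - 1 > 0\<close> by (simp add: field_simps)
qed

lemma TS0: "TS \<xi> 0 = 0" by (simp add: TS_def)

lemma part1:
  "1.3 * lam powi (int n - 5) < wt (tail \<xi> (int n - 3) @ [V n])
   \<and> wt (tail \<xi> (int n - 3) @ [V n]) \<le> lam ^ n"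
proof -
  have l0: "lam > 0" and l1: "lam > 1" using lam_lo by auto
  have w: "wt (tail \<xi> (int n - 3) @ [V n]) = lam^n - TS \<xi> (nat (int n - 2))"
    by (simp add: wt_app wt_tail) (simp add: wt_def)
  have p: "lam powi (int n - 5) = lam^n / lam^5"
    using l0 by (simp add: power_int_diff)
  have up: "wt (tail \<xi> (int n - 3) @ [V n]) \<le> lam ^ n"
    using w TS_bounds[of \<xi>] by simp
  have l5: "lam^5 = lam^2 * (lam + 2)"
  proof -
    have "lam^5 = lam^2 * lam^3" by (simp add: eval_nat_numeral)
    thus ?thesis using lam_cube by simp
  qed
  show ?thesis
  proof (cases "n \<ge> 2")
    case True
    define a where "a = lam^(n-2)"
    have a0: "a > 0" using l0 a_def by simp
    have na: "lam^n = a * lam^2" using True unfolding a_def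
      by (metis le_add_diff_inverse2 power_add)
    have k: "nat (int n - 2) = n - 2" using True by simp
    have T: "TS \<xi> (n-2) < a / (lam - 1)" using TS_lt a_def by simp
    have key: "lam^2 - 1/(lam - 1) - 1.3/(lam+2) > 0"
    proof -
      have e: "lam^2 - 1/(lam - 1) - 1.3/(lam+2) = ((0.7*lam + 1.3 - lam^2)) / ((lam - 1)*(lam+2))"
      proof -
        have d: "(lam - 1)*(lam+2) > 0" using l1 by simp
        have l4: "lam^4 = lam^2 + 2*lam" using lam_cube
          by (simp add: eval_nat_numeral algebra_simps)
        have "(lam^2 - 1/(lam - 1) - 1.3/(lam+2)) * ((lam - 1)*(lam+2))
              = lam^4 + lam^3 - 2*lam^2 - (lam + 2) - 1.3*(lam - 1)"
        proof -
          have gen: "\<And>X b c d::real. b \<noteq> 0 \<Longrightarrow> d \<noteq> 0 \<Longrightarrow> (X - 1/b - c/d)*(b*d) = X*b*d - d - c*b"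
            by (simp add: field_simps)
          have "lam^2*(lam - 1)*(lam+2) = lam^4 + lam^3 - 2*lam^2"
            by (simp add: eval_nat_numeral algebra_simps)
          thus ?thesis using gen[where X="lam^2" and b="lam - 1" and c="1.3" and d="lam + 2"] l1 by simp
        qed
        also have "... = (0.7*lam + 1.3 - lam^2)" using l4 lam_cube by (simp add: field_simps)
        finally show ?thesis using d by (simp add: field_simps)
      qed
      have "(0.7*lam + 1.3 - lam^2) > 0"
      proof -
        have "(0.7*lam + 1.3 - lam^2) = (1.6 - lam) * (lam + 1) + 0.1 * lam - 0.3"
          by (simp add: power2_eq_square field_simps)
        moreover have "(1.6 - lam) * (lam + 1) \<ge> 0.07 * 2.52"
          using lam_hi lam_lo by (intro mult_mono) auto
        ultimately show ?thesis using lam_lo by simp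
      qed
      thus ?thesis using e l1 by simp
    qed
    have "1.3 * (a * lam^2 / (lam^2 * (lam + 2))) = a * (1.3/(lam+2))"
    proof -
      have "lam^2 \<noteq> 0" "lam + 2 \<noteq> 0" using l0 by auto
      thus ?thesis by simp
    qed
    also have "... < a * (lam^2 - 1/(lam - 1))"
      using key a0 by (intro mult_strict_left_mono) auto
    also have "... = a * lam^2 - a/(lam - 1)" by (simp add: algebra_simps)
    also have "... < a * lam^2 - TS \<xi> (n-2)" using T by simp
    finally show ?thesis using up w p na l5 k by simp
  next
    case False
    hence k: "nat (int n - 2) = 0" by simp
    have "lam^5 > 1.3"
    proof -
      have "lam^5 \<ge> lam" using l1 by (simp add: power_increasing[of 1 5 lam, simplified])
      thus ?thesis using lam_lo by simp
    qed
    hence "1.3 * (lam^n / lam^5) < lam^n" using l0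
      by (simp add: field_simps)
    thus ?thesis using up w p k TS0 by simp
  qed
qed


lemma aux_ineq: "(P::real) - 1 = S + L + 11/1250 \<Longrightarrow> S \<ge> 0 \<Longrightarrow> L > 0 \<Longrightarrow> P > 1"
  by linarith

lemma part2:
  assumes "n \<ge> 2"
  shows "1.1 * lam powi (int n - 4) < wt (tail \<xi> (int n - 5) @ [X (n - 2), V n])
          \<and> wt (tail \<xi> (int n - 5) @ [X (n - 2), V n]) \<le> 2 * lam powi (int n - 3)"
proof -
  have l0: "lam > 0" and l1: "lam > 1" using lam_lo by auto
  define c where "c = lam^(n-2)"
  define b where "b = c / lam^2"
  have c0: "c > 0" using l0 c_def by simp
  have b0: "b > 0" using c0 l0 b_def by simp
  have cb: "c = b * lam^2" using b_def l0 by simp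
  have na: "lam^n = c * lam^2" using assms unfolding c_def
    by (metis le_add_diff_inverse2 power_add)
  have w: "wt (tail \<xi> (int n - 5) @ [X (n - 2), V n]) = lam^n - c - TS \<xi> (nat (int n - 4))"
    by (simp add: wt_app wt_tail c_def) (simp add: wt_def)
  have e3: "int n - 3 = int (n-2) - 1" "int n - 4 = int (n-2) - 2" using assms by auto
  have p3: "lam powi (int n - 3) = c / lam"
    unfolding e3 using l0 by (simp add: power_int_diff c_def)
  have p4: "lam powi (int n - 4) = b"
    unfolding e3 b_def using l0 by (simp add: power_int_diff c_def)
  have sq: "lam^2 - 1 = 2 / lam"
  proof -
    have "lam * (lam^2 - 1) = 2" using lam_cube by (simp add: algebra_simps eval_nat_numeral)
    thus ?thesis using l0 by (simp add: field_simps)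
  qed
  have main: "lam^n - c = 2 * lam * b"
  proof -
    have "lam^n - c = c * (lam^2 - 1)" using na by (simp add: algebra_simps)
    also have "... = b * lam^2 * (2 / lam)" using cb sq by simp
    also have "... = 2 * lam * b" using l0 by (simp add: power2_eq_square)
    finally show ?thesis .
  qed
  have T: "TS \<xi> (nat (int n - 4)) < b / (lam - 1)"
  proof (cases "n \<ge> 4")
    case True
    have "lam^(n-4) = b"
    proof -
      have "n - 2 = (n - 4) + 2" using True by simp
      hence "lam^(n-2) = lam^(n-4) * lam^2" by (simp only: power_add)
      thus ?thesis using b_def c_def l0 by simp
    qed
    moreover have "nat (int n - 4) = n - 4" using True by simp
    ultimately show ?thesis using TS_lt[of \<xi> "n-4"] by simp
  next
    case False
    hence "nat (int n - 4) = 0" by simp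
    thus ?thesis using TS0 b0 l1 by simp
  qed
  have key: "2 * lam - 1/(lam - 1) - 1.1 > 0"
  proof -
    have "(2*lam - 1.1)*(lam - 1) - 1 = 2 * ((lam - (38/25))*(lam - (38/25))) + (149/50)*(lam - (38/25)) + (11/1250)"
      by (simp add: field_simps)
    moreover have "2 * ((lam - (38/25))*(lam - (38/25))) \<ge> 0" using zero_le_square[of "lam - (38/25)"] by simp
    moreover have "(149/50)*(lam - (38/25)) > 0" using lam_lo by simp
    ultimately have "(2*lam - 1.1)*(lam - 1) > 1"
      using aux_ineq[of "(2*lam - 1.1)*(lam - 1)"] by blast
    hence "2*lam - 1.1 > 1/(lam - 1)" using l1 by (simp add: field_simps)
    thus ?thesis by simp
  qed
  have low: "1.1 * b < 2 * lam * b - TS \<xi> (nat (int n - 4))"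
  proof -
    have "1.1 * b < b * (2 * lam - 1/(lam - 1))"
    proof -
      have "b * (2 * lam - 1/(lam - 1) - 1.1) > 0" using key b0 by simp
      thus ?thesis by (simp add: algebra_simps)
    qed
    also have "... = 2 * lam * b - b / (lam - 1)" by (simp add: algebra_simps)
    finally show ?thesis using T by simp
  qed
  have up: "lam^n - c - TS \<xi> (nat (int n - 4)) \<le> 2 * (c / lam)"
    using main TS_bounds[of \<xi>] cb l0 by (simp add: power2_eq_square)
  show ?thesis using w p3 p4 main low up by simp
qed

theorem lemma8p1:
  shows "(\<forall>(n::nat) (\<xi>::nat \<Rightarrow> bool).
            1.3 * lam powi (int n - 5) < wt (tail \<xi> (int n - 3) @ [V n])
          \<and> wt (tail \<xi> (int n - 3) @ [V n]) \<le> lam ^ n)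
       \<and> (\<forall>(n::nat) (\<xi>::nat \<Rightarrow> bool). n \<ge> 2 \<longrightarrow>
            1.1 * lam powi (int n - 4) < wt (tail \<xi> (int n - 5) @ [X (n - 2), V n])
          \<and> wt (tail \<xi> (int n - 5) @ [X (n - 2), V n]) \<le> 2 * lam powi (int n - 3))"
  using part1 part2 by blast

end
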